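(* Consider a continuous nondecreasing function $\varphi:[0,\infty)\to\mathbb{R}$ with $\varphi(0)=0$. If the sum $\sum_{i,j} m_{i,j}\varphi(2^{-j})$ converges, then with probability one, \[ \sum_{(i,\lambda)\in\mathrm{M}} \varphi(2^{-j(\lambda)})<\infty. \] If it diverges and $r^d={\rm o}(\varphi(r))$ as $r\to 0$, then the set $L_{\varphi^{1/d}}$ almost surely has full Lebesgue measure in $\mathbb{T}^d$.
   Context: Let $\mathbb{N}_0$ be the nonnegative integers and $\mathcal{I}=\{1,\dots,2^d-1\}$. Let $\phi:\mathbb{R}^d\to\mathbb{T}^d=\mathbb{R}^d/\mathbb{Z}^d$ be the canonical surjection and $\operatorname{dist}$ the quotient distance on $\mathbb{T}^d$. Let $\Lambda$ be the set of dyadic cubes $\lambda=\phi(2^{-j}(k+[0,1)^d))$, $j\in\mathbb{N}_0$, $k\in\{0,\dots,2^j-1\}^d$; write $j(\lambda)=j$ (the generation) and $x_\lambda=\phi(k2^{-j})$. Fix integers $m_{i,j}\in\{0,\dots,2^{dj}\}$ for $(i,j)\in\mathcal{I}\times\mathbb{N}_0$. Let $(X_{i,n})_{(i,n)\in\mathcal{I}\times\mathbb{N}_0}$ be i.i.d. random points of $\mathbb{T}^d$ with law the Lebesgue measure; $\mathcal{N}_i=\{0,\dots,-1+\sum_j m_{i,j}\}$ if this sum is finite, else $\mathbb{N}_0$; $j_{i,n}=\min\{j\in\mathbb{N}_0: n<\sum_{j'=0}^j m_{i,j'}\}$; $\lambda_{i,n}$ the dyadic cube of generation $j_{i,n}$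 containing $X_{i,n}$; $\mathrm{M}=\{(i,\lambda)\in\mathcal{I}\times\Lambda:\exists n\in\mathcal{N}_i,\ \lambda=\lambda_{i,n}\}$ (the index set of nonvanishing coefficients of the lacunary wavelet series). For a continuous nondecreasing $\psi:[0,\infty)\to\mathbb{R}$ with $\psi(0)=0$, $L_\psi=\{x\in\mathbb{T}^d: \operatorname{dist}(x,x_\lambda)<\psi(2^{-j(\lambda)})\text{ for infinitely many }(i,\lambda)\in\mathrm{M}\}$. *)

theory Defs
  imports "HOL-Probability.Probability"
begin

text \<open>Points of the torus T^d are represented by their representatives in [0,1)^d.\<close>
definition unit_cube :: "(real^'d) set" where
  "unit_cube = {x. \<forall>l. 0 \<le> x$l \<and> x$l < 1}"

definition tdist :: "real^'d \<Rightarrow> real^'d \<Rightarrow> real" where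
  "tdist x y = (INF z\<in>{z::real^'d. \<forall>l. z$l \<in> \<int>}. dist x (y + z))"

definition idx_set :: "nat \<Rightarrow> nat set" where
  "idx_set d = {1..2^d - 1}"

definition cum :: "(nat \<Rightarrow> nat \<Rightarrow> nat) \<Rightarrow> nat \<Rightarrow> nat \<Rightarrow> nat" where
  "cum m i j = (\<Sum>j'\<le>j. m i j')"

definition Nset :: "(nat \<Rightarrow> nat \<Rightarrow> nat) \<Rightarrow> nat \<Rightarrow> nat set" where
  "Nset m i = {n. \<exists>j. n < cum m i j}"

definition jgen :: "(nat \<Rightarrow> nat \<Rightarrow> nat) \<Rightarrow> nat \<Rightarrow> nat \<Rightarrow> nat" where
  "jgen m i n = (LEAST j. n < cum m i j)"

definition dyad_index :: "nat \<Rightarrow> real^'d \<Rightarrow> ('d \<Rightarrow> int)" where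
  "dyad_index j x = (\<lambda>l. \<lfloor>2^j * frac (x$l)\<rfloor>)"

definition dyad_point :: "nat \<Rightarrow> ('d \<Rightarrow> int) \<Rightarrow> real^'d" where
  "dyad_point j k = (\<chi> l. real_of_int (k l) / 2^j)"

text \<open>The random index set M; a dyadic cube is encoded by (j, k).\<close>
definition Mset :: "(nat \<Rightarrow> nat \<Rightarrow> nat) \<Rightarrow> (nat \<Rightarrow> nat \<Rightarrow> 'w \<Rightarrow> real^'d) \<Rightarrow> 'w
    \<Rightarrow> (nat \<times> nat \<times> ('d \<Rightarrow> int)) set" where
  "Mset m X \<omega> = {(i, j, k). i \<in> idx_set CARD('d) \<and>
      (\<exists>n\<in>Nset m i. j = jgen m i n \<and> k = dyad_index j (X i n \<omega>))}"

definition Lset :: "(real \<Rightarrow> real) \<Rightarrow> (nat \<Rightarrow> nat \<Rightarrow> nat) \<Rightarrow> (nat \<Rightarrow> nat \<Rightarrow> 'w \<Rightarrow> real^'d)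
    \<Rightarrow> 'w \<Rightarrow> (real^'d) set" where
  "Lset \<psi> m X \<omega> = {x \<in> unit_cube. infinite {(i, j, k) \<in> Mset m X \<omega>.
      tdist x (dyad_point j k) < \<psi> ((1/2)^j)}}"

end

theory Submission
  imports Defs
begin


lemma cum_mono: "j \<le> j' \<Longrightarrow> cum m i j \<le> cum m i j'"
  unfolding cum_def by (intro sum_mono2) auto

lemma cum_Suc: "cum m i (Suc j) = cum m i j + m i (Suc j)"
  unfolding cum_def by simp

lemma jgen_eq:
  assumes "n < cum m i j" "j = 0 \<or> cum m i (j - 1) \<le> n"
  shows "jgen m i n = j"
  unfolding jgen_def
proof (rule Least_equality)
  show "n < cum m i j" by fact
  fix y assume y: "n < cum m i y"
  show "j \<le> y"
  proof (rule ccontr)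
    assume "\<not> j \<le> y"
    then have "y \<le> j - 1" "j \<noteq> 0" by auto
    then have "cum m i y \<le> cum m i (j-1)" by (intro cum_mono) simp
    with y assms \<open>j\<noteq>0\<close> show False by auto
  qed
qed

lemma jgen_lt: "n \<in> Nset m i \<Longrightarrow> n < cum m i (jgen m i n)"
  unfolding Nset_def jgen_def by (auto intro: LeastI)

lemma jgen_le: "n < cum m i J \<Longrightarrow> jgen m i n \<le> J"
  unfolding jgen_def by (rule Least_le)

lemma sum_jgen: "(\<Sum>n<cum m i J. h (jgen m i n)) = (\<Sum>j\<le>J. real (m i j) * h j)"
proof (induction J)
  case 0
  have "(\<Sum>n<cum m i 0. h (jgen m i n)) = (\<Sum>n<cum m i 0. h 0)"
    by (intro sum.cong refl) (auto intro!: arg_cong[where f=h] jgen_eq)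
  then show ?case by (simp add: cum_def)
next
  case (Suc J)
  have "{..<cum m i (Suc J)} = {..<cum m i J} \<union> {cum m i J..<cum m i (Suc J)}"
    using cum_mono[of J "Suc J" m i] by auto
  have "(\<Sum>n<cum m i (Suc J). h (jgen m i n)) =
     (\<Sum>n<cum m i J. h (jgen m i n)) + (\<Sum>n\<in>{cum m i J..<cum m i (Suc J)}. h (jgen m i n))"
    by (subst \<open>{..<cum m i (Suc J)} = _\<close>, rule sum.union_disjoint) auto
  also have "(\<Sum>n\<in>{cum m i J..<cum m i (Suc J)}. h (jgen m i n)) = (\<Sum>n\<in>{cum m i J..<cum m i (Suc J)}. h (Suc J))"
    by (intro sum.cong refl) (auto intro!: arg_cong[where f=h] jgen_eq)
  also have "\<dots> = real (m i (Suc J)) * h (Suc J)" by (simp add: cum_Suc)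
  finally show ?case using Suc by simp
qed

definition gmap :: "(nat \<Rightarrow> nat \<Rightarrow> nat) \<Rightarrow> (nat \<Rightarrow> nat \<Rightarrow> 'w \<Rightarrow> real^'d) \<Rightarrow> 'w \<Rightarrow> nat \<times> nat \<Rightarrow> nat \<times> nat \<times> ('d \<Rightarrow> int)" where
  "gmap m X \<omega> = (\<lambda>(i,n). (i, jgen m i n, dyad_index (jgen m i n) (X i n \<omega>)))"

lemma Mset_eq: fixes X :: "nat \<Rightarrow> nat \<Rightarrow> 'w \<Rightarrow> real^'d" shows "Mset m X \<omega> = gmap m X \<omega> ` (SIGMA i:idx_set CARD('d). Nset m i)"
  unfolding Mset_def gmap_def by (auto simp: image_iff)

lemma part1:
  fixes X :: "nat \<Rightarrow> nat \<Rightarrow> 'w \<Rightarrow> real^'d" and \<phi> :: "real \<Rightarrow> real"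
  assumes nonneg: "\<And>j::nat. \<phi> ((1/2)^j) \<ge> 0"
  and sm: "(\<lambda>(i, j). real (m i j) * \<phi> ((1/2)^j)) summable_on (idx_set CARD('d) \<times> UNIV)"
  shows "(\<lambda>(i, j, k). \<phi> ((1/2)^j)) summable_on Mset m X \<omega>"
proof (rule nonneg_bdd_above_summable_on)
  let ?f = "\<lambda>(i::nat, j::nat, k::'d\<Rightarrow>int). \<phi> ((1/2)^j)"
  let ?T = "SIGMA i:idx_set CARD('d). Nset m i"
  let ?g = "gmap m X \<omega>"
  let ?h = "\<lambda>(i, j). real (m i j) * \<phi> ((1/2)^j)"
  show "\<And>x. x \<in> Mset m X \<omega> \<Longrightarrow> 0 \<le> ?f x" using nonneg by auto
  show "bdd_above (sum ?f ` {F. F \<subseteq> Mset m X \<omega> \<and> finite F})"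
  proof (rule bdd_aboveI2)
    fix F assume F: "F \<in> {F. F \<subseteq> Mset m X \<omega> \<and> finite F}"
    then have "F \<subseteq> ?g ` ?T" "finite F" using Mset_eq[of m X \<omega>] by auto
    then obtain P where P: "P \<subseteq> ?T" "finite P" "F = ?g ` P"
      by (meson finite_subset_image)
    define J where "J = Max ((\<lambda>(i,n). jgen m i n) ` P)"
    have PJ: "P \<subseteq> (SIGMA i:idx_set CARD('d). {..<cum m i J})"
    proof
      fix t assume t: "t \<in> P"
      obtain i n where tin: "t = (i,n)" by force
      have "jgen m i n \<le> J" unfolding J_def using P t tin by (intro Max_ge) force+
      moreover have "n < cum m i (jgen m i n)" using P t tin by (intro jgen_lt) auto
      ultimately have "n < cum m i J" using cum_mono[of "jgen m i n" J m i] by linarith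
      then show "t \<in> (SIGMA i:idx_set CARD('d). {..<cum m i J})" using P t tin by auto
    qed
    have "sum ?f F \<le> sum (?f \<circ> ?g) P"
      unfolding P(3) using P nonneg by (intro sum_image_le) (auto simp: gmap_def split: prod.splits)
    also have "\<dots> \<le> sum (?f \<circ> ?g) (SIGMA i:idx_set CARD('d). {..<cum m i J})"
      using PJ nonneg by (intro sum_mono2) (auto simp: gmap_def idx_set_def)
    also have "\<dots> = (\<Sum>i\<in>idx_set CARD('d). \<Sum>n<cum m i J. \<phi> ((1/2)^(jgen m i n)))"
      unfolding gmap_def comp_def by (subst sum.Sigma) (auto simp: idx_set_def intro!: sum.cong)
    also have "\<dots> = (\<Sum>i\<in>idx_set CARD('d). \<Sum>j\<le>J. real (m i j) * \<phi> ((1/2)^j))"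
      using sum_jgen[where h="\<lambda>j. \<phi> ((1/2)^j)" and m=m and J=J] by simp
    also have "\<dots> = sum ?h (idx_set CARD('d) \<times> {..J})"
      by (subst sum.Sigma[symmetric]) (auto simp: idx_set_def)
    also have "\<dots> \<le> infsum ?h (idx_set CARD('d) \<times> UNIV)"
      using sm nonneg by (intro finite_sum_le_infsum) (auto simp: idx_set_def)
    finally show "sum ?f F \<le> infsum ?h (idx_set CARD('d) \<times> UNIV)" .
  qed
qed

lemma bc2:
  assumes P: "prob_space M" and cT: "countable T"
   and meas: "\<And>t. t\<in>T \<Longrightarrow> E t \<in> sets M"
   and indep: "\<And>J. J \<subseteq> T \<Longrightarrow> finite J \<Longrightarrow> J \<noteq> {} \<Longrightarrow>
        measure M (\<Inter>t\<in>J. space M - E t) = (\<Prod>t\<in>J. measure M (space M - E t))"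
   and unb: "\<And>G K. finite G \<Longrightarrow> \<exists>F. finite F \<and> F \<subseteq> T - G \<and> K \<le> (\<Sum>t\<in>F. measure M (E t))"
  shows "AE \<omega> in M. infinite {t\<in>T. \<omega> \<in> E t}"
proof -
  interpret prob_space M by fact
  have key: "AE \<omega> in M. \<exists>t\<in>T-G. \<omega> \<in> E t" if G: "G \<in> {G. finite G \<and> G \<subseteq> T}" for G
  proof -
    define B where "B = space M - (\<Union>t\<in>T-G. E t)"
    have "countable (T - G)" using cT by (rule countable_subset[rotated]) auto
    then have "(\<Union>t\<in>T-G. E t) \<in> sets M"
      by (rule sets.countable_UN') (use meas in blast)
    then have Bm: "B \<in> sets M" unfolding B_def by (intro sets.Diff sets.top)
    have le: "measure M B \<le> exp (-K)" for K
    proof -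
      have "finite G" using G by simp
      obtain F where F: "finite F" "F \<subseteq> T - G" "K \<le> (\<Sum>t\<in>F. measure M (E t))"
        using unb[OF \<open>finite G\<close>, of K] by blast
      show ?thesis
      proof (cases "F = {}")
        case True
        then have "K \<le> 0" using F by simp
        have "measure M B \<le> 1" by (rule prob_le_1)
        also have "1 \<le> exp (-K)" using \<open>K \<le> 0\<close> exp_ge_add_one_self[of "-K"] by linarith
        finally show ?thesis .
      next
        case False
        have "B \<subseteq> (\<Inter>t\<in>F. space M - E t)" using F False unfolding B_def by auto
        moreover have "(\<Inter>t\<in>F. space M - E t) \<in> sets M"
          using F False meas by (intro sets.finite_INT) auto
        ultimately have "measure M B \<le> measure M (\<Inter>t\<in>F. space M - E t)"
          by (rule finite_measure_mono)
        also have "\<dots> = (\<Prod>t\<in>F. measure M (space M - E t))"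
          using F False by (intro indep) auto
        also have "\<dots> = (\<Prod>t\<in>F. 1 - measure M (E t))"
          using F meas by (intro prod.cong refl prob_compl) auto
        also have "\<dots> \<le> (\<Prod>t\<in>F. exp (- measure M (E t)))"
        proof (intro prod_mono conjI)
          fix t assume "t \<in> F"
          show "0 \<le> 1 - measure M (E t)" using prob_le_1[of "E t"] by simp
          show "1 - measure M (E t) \<le> exp (- measure M (E t))"
            using exp_ge_add_one_self[of "- measure M (E t)"] by simp
        qed
        also have "\<dots> = exp (- (\<Sum>t\<in>F. measure M (E t)))"
          by (subst sum_negf[symmetric], subst exp_sum[OF F(1)]) simp
        also have "\<dots> \<le> exp (-K)" using F by simp
        finally show ?thesis .
      qed
    qed
    have "measure M B = 0"
    proof (rule ccontr)
      assume "measure M B \<noteq> 0"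
      then have pos: "measure M B > 0" using measure_nonneg[of M B] by linarith
      have "measure M B \<le> exp (- (- ln (measure M B / 2)))" by (rule le)
      also have "\<dots> = measure M B / 2" using pos by simp
      finally show False using pos by simp
    qed
    then have "emeasure M B = 0" by (simp add: emeasure_eq_measure)
    moreover have eq: "{x\<in>space M. \<not> (\<exists>t\<in>T-G. x \<in> E t)} = B" unfolding B_def by auto
    ultimately show ?thesis by (subst AE_iff_measurable[OF Bm eq])
  qed
  have "AE \<omega> in M. \<forall>G\<in>{G. finite G \<and> G \<subseteq> T}. \<exists>t\<in>T-G. \<omega> \<in> E t"
    by (rule AE_ball_countable'[OF key]) (use cT countable_Collect_finite_subset in auto)
  then show ?thesis
  proof (rule eventually_mono)
    fix \<omega> assume H: "\<forall>G\<in>{G. finite G \<and> G \<subseteq> T}. \<exists>t\<in>T-G. \<omega> \<in> E t"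
    show "infinite {t\<in>T. \<omega> \<in> E t}"
    proof
      assume "finite {t\<in>T. \<omega> \<in> E t}"
      then obtain t where "t \<in> T - {t\<in>T. \<omega> \<in> E t}" "\<omega> \<in> E t" using H by blast
      then show False by auto
    qed
  qed
qed



definition latt :: "(real^'d) set" where "latt = {z. \<forall>l. z$l \<in> \<int>}"

lemma tdist_infdist: "tdist x y = infdist (x - y) (latt :: (real^'d) set)"
proof -
  have ne: "(latt :: (real^'d) set) \<noteq> {}" unfolding latt_def by (auto intro!: exI[of _ 0])
  show ?thesis
    unfolding tdist_def infdist_notempty[OF ne] unfolding latt_def
    by (intro INF_cong refl) (simp add: dist_norm algebra_simps)
qed

lemma tdist_le_dist: "tdist x y \<le> dist x y"
proof -
  have "tdist x y \<le> dist (x - y) 0" unfolding tdist_infdist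
    by (rule infdist_le) (simp add: latt_def)
  then show ?thesis by (simp add: dist_norm)
qed

lemma tdist_cont: "continuous_on UNIV (\<lambda>p::(real^'d) \<times> (real^'d). tdist (fst p) (snd p))"
  unfolding tdist_infdist by (intro continuous_intros)

lemma vec_nth_meas[measurable]: "(\<lambda>x::real^'d. x $ l) \<in> borel_measurable borel"
  by (intro borel_measurable_continuous_onI linear_continuous_on bounded_linear_vec_nth)

lemma dyad_meas[measurable]:
  "(\<lambda>y::real^'d. dyad_point j (dyad_index j y)) \<in> borel_measurable borel"
proof -
  have "(\<lambda>y::real^'d. (dyad_point j (dyad_index j y)) $ l) \<in> borel_measurable borel" for l
    unfolding dyad_point_def dyad_index_def frac_def by simp measurable
  then show ?thesis
    by (subst borel_measurable_euclidean_space) (auto simp: Basis_vec_def inner_axis)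
qed

lemma unit_cube_meas[measurable]: "(unit_cube :: (real^'d) set) \<in> sets borel"
proof -
  have "(unit_cube :: (real^'d) set) = (\<Inter>l\<in>UNIV. {x. 0 \<le> x$l} \<inter> {x. x$l < 1})"
    unfolding unit_cube_def by auto
  also have "\<dots> \<in> sets borel" by measurable
  finally show ?thesis .
qed

lemma box_exists:
  fixes x :: "real^'d"
  assumes x: "x \<in> unit_cube" and s: "0 < s" "s \<le> 1/2"
  shows "\<exists>B. B \<in> sets borel \<and> B \<subseteq> unit_cube \<and> emeasure lborel B = ennreal (s ^ CARD('d))
     \<and> (\<forall>y\<in>B. \<forall>l. \<bar>y$l - x$l\<bar> \<le> s)"
proof -
  define a :: "real^'d" where "a = (\<chi> l. if x$l \<ge> 1/2 then x$l - s else x$l)"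
  define b :: "real^'d" where "b = (\<chi> l. a$l + s)"
  have x01: "0 \<le> x$l" "x$l < 1" for l using x unfolding unit_cube_def by auto
  have ne: "cbox a b \<noteq> {}"
  proof -
    have "a \<in> cbox a b" unfolding mem_box_cart b_def using s by auto
    then show ?thesis by auto
  qed
  have "measure lborel (cbox a b) = (\<Prod>l\<in>UNIV. b$l - a$l)" by (rule content_cbox_cart[OF ne])
  also have "\<dots> = s ^ CARD('d)" unfolding b_def by simp
  finally have c: "measure lborel (cbox a b) = s ^ CARD('d)" .
  have "emeasure lborel (cbox a b) = ennreal (measure lborel (cbox a b))"
    using emeasure_lborel_cbox_finite[of a b] by (intro emeasure_eq_ennreal_measure) auto
  then have e: "emeasure lborel (cbox a b) = ennreal (s ^ CARD('d))" using c by simp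
  have sub: "cbox a b \<subseteq> unit_cube"
  proof
    fix y assume "y \<in> cbox a b"
    then have "a$l \<le> y$l \<and> y$l \<le> a$l + s" for l unfolding mem_box_cart b_def by auto
    then show "y \<in> unit_cube" unfolding unit_cube_def a_def using x01 s
      by (auto simp: split: if_splits) (smt (verit))+
  qed
  have cl: "\<forall>y\<in>cbox a b. \<forall>l. \<bar>y$l - x$l\<bar> \<le> s"
  proof (intro ballI allI)
    fix y l assume "y \<in> cbox a b"
    then have "a$l \<le> y$l \<and> y$l \<le> a$l + s" unfolding mem_box_cart b_def by auto
    then show "\<bar>y$l - x$l\<bar> \<le> s" unfolding a_def using s by (auto split: if_splits)
  qed
  show ?thesis using e sub cl by (intro exI[of _ "cbox a b"]) auto
qed

lemma dyad_close:
  fixes y :: "real^'d"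
  assumes "y \<in> unit_cube"
  shows "\<bar>y$l - dyad_point j (dyad_index j y) $ l\<bar> \<le> (1/2)^j"
proof -
  have "frac (y$l) = y$l" using assms unfolding unit_cube_def by (auto intro: frac_eq[THEN iffD2])
  then have eq: "dyad_point j (dyad_index j y) $ l = real_of_int \<lfloor>2^j * y$l\<rfloor> / 2^j"
    unfolding dyad_point_def dyad_index_def by simp
  have p: "(2::real)^j > 0" by simp
  have "real_of_int \<lfloor>2^j * y$l\<rfloor> \<le> 2^j * y$l" "2^j * y$l < real_of_int \<lfloor>2^j * y$l\<rfloor> + 1"
    by linarith+
  then have "\<bar>2^j * y$l - real_of_int \<lfloor>2^j * y$l\<rfloor>\<bar> \<le> 1" by linarith
  then have "\<bar>y$l - real_of_int \<lfloor>2^j * y$l\<rfloor> / 2^j\<bar> \<le> 1 / 2^j"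
    using p by (simp add: field_simps abs_div_pos[symmetric] divide_le_eq)
  then show ?thesis unfolding eq by (simp add: power_one_over)
qed

lemma cover_prob:
  fixes Y :: "'w \<Rightarrow> real^'d" and x :: "real^'d"
  assumes P: "prob_space M" and D: "distributed M lborel Y (\<lambda>x. indicator unit_cube x)"
    and x: "x \<in> unit_cube" and s: "0 < s" "s \<le> 1/2"
    and c: "real CARD('d) * (s + (1/2)^j) < c"
  shows "s ^ CARD('d) \<le> measure M {\<omega>\<in>space M. tdist x (dyad_point j (dyad_index j (Y \<omega>))) < c}"
proof -
  interpret prob_space M by fact
  obtain B where B: "B \<in> sets borel" "B \<subseteq> unit_cube" "emeasure lborel B = ennreal (s ^ CARD('d))"
     "\<forall>y\<in>B. \<forall>l. \<bar>y$l - x$l\<bar> \<le> s"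
    using box_exists[OF x s] by blast
  have Ym: "Y \<in> borel_measurable M"
    using distributed_measurable[OF D] by (simp add: measurable_lborel1)
  have inB: "tdist x (dyad_point j (dyad_index j y)) < c" if y: "y \<in> B" for y
  proof -
    have yu: "y \<in> unit_cube" using y B by auto
    have "tdist x (dyad_point j (dyad_index j y)) \<le> dist x (dyad_point j (dyad_index j y))"
      by (rule tdist_le_dist)
    also have "\<dots> \<le> (\<Sum>l\<in>UNIV. \<bar>(x - dyad_point j (dyad_index j y))$l\<bar>)"
      unfolding dist_norm by (rule norm_le_l1_cart)
    also have "\<dots> \<le> (\<Sum>l\<in>(UNIV::'d set). s + (1/2)^j)"
    proof (rule sum_mono)
      fix l
      have "\<bar>y$l - x$l\<bar> \<le> s" using B y by auto
      moreover have "\<bar>y$l - dyad_point j (dyad_index j y) $ l\<bar> \<le> (1/2)^j" by (rule dyad_close[OF yu])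
      ultimately show "\<bar>(x - dyad_point j (dyad_index j y))$l\<bar> \<le> s + (1/2)^j" by simp
    qed
    also have "\<dots> = real CARD('d) * (s + (1/2)^j)" by simp
    finally show ?thesis using c by linarith
  qed
  have Sm: "{y. tdist x (dyad_point j (dyad_index j y)) < c} \<in> sets borel"
    using borel_measurable_continuous_Pair[OF measurable_const[of x] dyad_meas[of j] tdist_cont]
    by measurable
  have "emeasure M (Y -` B \<inter> space M) = (\<integral>\<^sup>+y. indicator unit_cube y * indicator B y \<partial>lborel)"
    using B by (intro distributed_emeasure[OF D]) auto
  also have "\<dots> = (\<integral>\<^sup>+y. indicator B y \<partial>lborel)"
    using B(2) by (intro nn_integral_cong) (auto simp: indicator_def)
  also have "\<dots> = ennreal (s ^ CARD('d))" using B by simp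
  finally have "prob (Y -` B \<inter> space M) = s ^ CARD('d)"
    using s by (simp add: emeasure_eq_measure)
  moreover have "prob (Y -` B \<inter> space M) \<le> measure M {\<omega>\<in>space M. tdist x (dyad_point j (dyad_index j (Y \<omega>))) < c}"
  proof (rule finite_measure_mono)
    show "Y -` B \<inter> space M \<subseteq> {\<omega>\<in>space M. tdist x (dyad_point j (dyad_index j (Y \<omega>))) < c}"
      using inB by auto
    have "Y -` {y. tdist x (dyad_point j (dyad_index j y)) < c} \<inter> space M \<in> sets M"
      using Ym Sm by (rule measurable_sets)
    then show "{\<omega>\<in>space M. tdist x (dyad_point j (dyad_index j (Y \<omega>))) < c} \<in> sets M"
      by (simp add: vimage_def Int_def conj_commute)
  qed
  ultimately show ?thesis by simp
qed



lemma root_powr: fixes y :: real assumes "0 < y" "0 < d" shows "(y ^ d) powr (1 / real d) = y"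
proof -
  have "(y ^ d) powr (1 / real d) = (y powr real d) powr (1 / real d)"
    using assms by (simp add: powr_realpow)
  also have "\<dots> = y" using assms by (simp add: powr_powr)
  finally show ?thesis .
qed

lemma constants:
  fixes \<phi> :: "real \<Rightarrow> real" and d :: nat
  assumes cont: "continuous_on {0..} \<phi>" and \<phi>0: "\<phi> 0 = 0"
    and nn: "\<And>r. r \<ge> 0 \<Longrightarrow> \<phi> r \<ge> 0"
    and o: "(\<lambda>r. r ^ d) \<in> o[at_right 0](\<phi>)" and d: "d > 0"
  shows "\<exists>J0. \<forall>j\<ge>J0. 0 < \<phi> ((1/2)^j) \<and> \<phi> ((1/2)^j) \<le> 1
           \<and> 2 * real d * (1/2)^j < \<phi> ((1/2)^j) powr (1 / real d)"
proof -
  define c0 :: real where "c0 = 1 / (2 * (2 * real d) ^ d)"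
  have c0: "c0 > 0" using d unfolding c0_def by simp
  have ev1: "eventually (\<lambda>r. norm (r ^ d) \<le> c0 * norm (\<phi> r)) (at_right 0)"
    using landau_o.smallD[OF o c0] .
  have tz: "(\<lambda>j::nat. (1/2::real)^j) \<longlonglongrightarrow> 0" by (rule LIMSEQ_realpow_zero) auto
  have lim: "filterlim (\<lambda>j::nat. (1/2::real)^j) (at_right 0) sequentially"
    unfolding filterlim_at using tz by (auto intro!: always_eventually)
  have ev1': "eventually (\<lambda>j. norm (((1/2::real)^j) ^ d) \<le> c0 * norm (\<phi> ((1/2)^j))) sequentially"
    using lim ev1 unfolding filterlim_iff by blast
  have "(\<lambda>j. \<phi> ((1/2::real)^j)) \<longlonglongrightarrow> \<phi> 0"
    by (rule continuous_on_tendsto_compose[OF cont tz]) auto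
  then have ev2: "eventually (\<lambda>j. \<phi> ((1/2::real)^j) < 1) sequentially"
    using \<phi>0 by (intro order_tendstoD) auto
  obtain J0 where J0: "\<And>j. j \<ge> J0 \<Longrightarrow> norm (((1/2::real)^j) ^ d) \<le> c0 * norm (\<phi> ((1/2)^j)) \<and> \<phi> ((1/2::real)^j) < 1"
    using eventually_conj[OF ev1' ev2] unfolding eventually_sequentially by blast
  show ?thesis
  proof (intro exI allI impI conjI)
    fix j assume j: "J0 \<le> j"
    define r :: real where "r = (1/2)^j"
    have r: "r > 0" unfolding r_def by simp
    have f0: "\<phi> r \<ge> 0" using nn r by simp
    have A: "r ^ d \<le> c0 * \<phi> r" using J0[OF j] r f0 unfolding r_def by simp
    have rd: "r ^ d > 0" using r by simp
    then show fpos: "0 < \<phi> ((1/2)^j)" using A c0 f0 unfolding r_def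
      by (metis less_le_trans mult_eq_0_iff order_less_le)
    show "\<phi> ((1/2)^j) \<le> 1" using J0[OF j] by simp
    have "(2 * real d * r) ^ d = (2 * real d) ^ d * r ^ d" by (simp add: power_mult_distrib)
    also have "\<dots> \<le> (2 * real d) ^ d * (c0 * \<phi> r)" using A by (intro mult_left_mono) auto
    also have "\<dots> = \<phi> r / 2" unfolding c0_def using d by simp
    also have "\<dots> < \<phi> r" using fpos unfolding r_def by simp
    finally have lt: "(2 * real d * r) ^ d < \<phi> r" .
    have "2 * real d * r = ((2 * real d * r) ^ d) powr (1 / real d)"
      using r d by (simp add: root_powr)
    also have "\<dots> < \<phi> r powr (1 / real d)"
      using lt d r by (intro powr_less_mono2) auto
    finally show "2 * real d * (1/2)^j < \<phi> ((1/2)^j) powr (1 / real d)" unfolding r_def .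
  qed
qed



lemma powr_pow_inv: fixes y :: real assumes "0 < y" "0 < d" shows "(y powr (1 / real d)) ^ d = y"
proof -
  have "(y powr (1 / real d)) ^ d = (y powr (1 / real d)) powr real d"
    using assms by (simp add: powr_realpow)
  also have "\<dots> = y" using assms by (simp add: powr_powr)
  finally show ?thesis .
qed

lemma fixed_x:
  fixes M :: "'w measure" and X :: "nat \<Rightarrow> nat \<Rightarrow> 'w \<Rightarrow> real^'d"
    and m :: "nat \<Rightarrow> nat \<Rightarrow> nat" and \<phi> :: "real \<Rightarrow> real" and x :: "real^'d"
  assumes P: "prob_space M"
    and indep: "prob_space.indep_vars M (\<lambda>_. borel) (\<lambda>(i, n). X i n) (idx_set CARD('d) \<times> UNIV)"
    and distr: "\<And>i n. i \<in> idx_set CARD('d) \<Longrightarrow>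
           distributed M lborel (X i n) (\<lambda>x. indicator unit_cube x)"
    and nn: "\<And>r. r \<ge> 0 \<Longrightarrow> \<phi> r \<ge> 0"
    and J0: "\<forall>j\<ge>J0. 0 < \<phi> ((1/2)^j) \<and> \<phi> ((1/2)^j) \<le> 1
           \<and> 2 * real CARD('d) * (1/2)^j < \<phi> ((1/2)^j) powr (1 / real CARD('d))"
    and ns: "\<not> (\<lambda>(i, j). real (m i j) * \<phi> ((1/2)^j)) summable_on (idx_set CARD('d) \<times> UNIV)"
    and x: "x \<in> unit_cube"
  shows "AE \<omega> in M. infinite {t \<in> (SIGMA i:idx_set CARD('d). Nset m i).
     tdist x (dyad_point (jgen m (fst t) (snd t)) (dyad_index (jgen m (fst t) (snd t)) (X (fst t) (snd t) \<omega>)))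
       < \<phi> ((1/2)^(jgen m (fst t) (snd t))) powr (1 / real CARD('d))}"
proof -
  interpret prob_space M by fact
  define d where "d = CARD('d)"
  have d: "d > 0" unfolding d_def by simp
  define I where "I = idx_set CARD('d)"
  have fI: "finite I" unfolding I_def idx_set_def by simp
  define T where "T = (SIGMA i:I. Nset m i)"
  define jj where "jj t = jgen m (fst t) (snd t)" for t :: "nat \<times> nat"
  define \<psi> where "\<psi> j = \<phi> ((1/2)^j) powr (1 / real d)" for j :: nat
  define E where "E t = {\<omega>\<in>space M. tdist x (dyad_point (jj t) (dyad_index (jj t) (X (fst t) (snd t) \<omega>))) < \<psi> (jj t)}" for t
  define S where "S t = {y. tdist x (dyad_point (jj t) (dyad_index (jj t) y)) < \<psi> (jj t)}" for t
  have Sm: "S t \<in> sets borel" for t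
    unfolding S_def
    using borel_measurable_continuous_Pair[OF measurable_const[of x] dyad_meas[of "jj t"] tdist_cont]
    by measurable
  have TI: "T \<subseteq> I \<times> UNIV" unfolding T_def by auto
  have Xm: "X (fst t) (snd t) \<in> borel_measurable M" if "t \<in> T" for t
    using distributed_measurable[OF distr[of "fst t" "snd t"]] that unfolding T_def I_def by auto
  have Ev: "E t = X (fst t) (snd t) -` S t \<inter> space M" for t
    unfolding E_def S_def by auto
  have Em: "E t \<in> sets M" if "t \<in> T" for t
    unfolding Ev using Xm[OF that] Sm by (rule measurable_sets)
  have compl: "(\<lambda>(i, n). X i n) t -` (- S t) \<inter> space M = space M - E t" for t
    unfolding Ev by (auto split: prod.splits)
  have ind: "measure M (\<Inter>t\<in>J. space M - E t) = (\<Prod>t\<in>J. measure M (space M - E t))"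
    if "J \<subseteq> T" "finite J" "J \<noteq> {}" for J
    using indep_varsD[OF indep, of J "\<lambda>t. - S t"] that TI Sm unfolding compl I_def by auto
  define c1 :: real where "c1 = 1 / (2 * real d) ^ d"
  have c1: "c1 > 0" unfolding c1_def using d by simp
  define h where "h j = (if J0 \<le> j then \<phi> ((1/2)^j) else 0)" for j :: nat
  have h0: "h j \<ge> 0" for j unfolding h_def using nn by simp
  have low: "c1 * h (jj t) \<le> measure M (E t)" if t: "t \<in> T" for t
  proof (cases "J0 \<le> jj t")
    case False then show ?thesis unfolding h_def by simp
  next
    case True
    define j where "j = jj t"
    have Jc: "0 < \<phi> ((1/2)^j)" "\<phi> ((1/2)^j) \<le> 1" "2 * real d * (1/2)^j < \<psi> j"
      using J0 True unfolding j_def \<psi>_def d_def by auto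
    have \<psi>pos: "\<psi> j > 0" unfolding \<psi>_def using Jc by simp
    have "\<psi> j \<le> 1 powr (1 / real d)" unfolding \<psi>_def using Jc by (intro powr_mono2) auto
    then have \<psi>1: "\<psi> j \<le> 1" by simp
    define s where "s = \<psi> j / (2 * real d)"
    have s: "0 < s" "s \<le> 1/2" unfolding s_def using \<psi>pos \<psi>1 d
      by (auto simp: field_simps)
    have cc: "real CARD('d) * (s + (1/2)^j) < \<psi> j"
      using Jc(3) d unfolding s_def d_def by (simp add: field_simps)
    have "s ^ CARD('d) \<le> measure M {\<omega>\<in>space M. tdist x (dyad_point j (dyad_index j (X (fst t) (snd t) \<omega>))) < \<psi> j}"
      using cover_prob[OF P distr[of "fst t" "snd t"] x s cc] t unfolding T_def I_def by auto
    also have "\<dots> = measure M (E t)" unfolding E_def j_def ..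
    finally have A: "s ^ d \<le> measure M (E t)" unfolding d_def .
    have "s ^ d = (\<psi> j) ^ d / (2 * real d) ^ d" unfolding s_def by (simp add: power_divide)
    also have "(\<psi> j) ^ d = \<phi> ((1/2)^j)" unfolding \<psi>_def using Jc d by (simp add: powr_pow_inv)
    finally have "s ^ d = c1 * h (jj t)" unfolding c1_def h_def j_def using True by simp
    then show ?thesis using A by simp
  qed
  define f where "f = (\<lambda>(i, j). real (m i j) * \<phi> ((1/2::real)^j))"
  have f0: "f p \<ge> 0" for p unfolding f_def using nn by (auto split: prod.splits)
  have nb: "\<not> bdd_above (sum f ` {F. F \<subseteq> I \<times> UNIV \<and> finite F})"
    using ns nonneg_bdd_above_summable_on[of "I \<times> UNIV" f] f0 unfolding f_def I_def by blast
  have big: "\<exists>F0. F0 \<subseteq> I \<times> UNIV \<and> finite F0 \<and> B < sum f F0" for B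
    using nb unfolding bdd_above_def by (auto simp: not_le)
  have unb: "\<exists>F. finite F \<and> F \<subseteq> T - G \<and> K \<le> (\<Sum>t\<in>F. measure M (E t))" if G: "finite G" for G K
  proof -
    define C0 where "C0 = sum f (I \<times> {..<J0})"
    define B where "B = K / c1 + (\<Sum>t\<in>G. h (jj t)) + C0"
    obtain F0 where F0: "F0 \<subseteq> I \<times> UNIV" "finite F0" "B < sum f F0" using big by blast
    define J1 where "J1 = Max (insert 0 (snd ` F0))"
    have F0J: "F0 \<subseteq> I \<times> {..J1}"
      using F0 unfolding J1_def by (force intro!: Max_ge)
    have "sum f F0 \<le> sum f (I \<times> {..J1})"
      using F0J fI f0 by (intro sum_mono2) auto
    also have "\<dots> \<le> (\<Sum>p\<in>I \<times> {..J1}. real (m (fst p) (snd p)) * h (snd p) + (if snd p < J0 then f p else 0))"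
      by (intro sum_mono) (auto simp: f_def h_def)
    also have "\<dots> = (\<Sum>p\<in>I \<times> {..J1}. real (m (fst p) (snd p)) * h (snd p)) + (\<Sum>p\<in>I \<times> {..J1}. if snd p < J0 then f p else 0)"
      by (rule sum.distrib)
    also have "(\<Sum>p\<in>I \<times> {..J1}. if snd p < J0 then f p else 0) = sum f {p\<in>I \<times> {..J1}. snd p < J0}"
      using fI by (intro sum.inter_filter[symmetric]) auto
    also have "\<dots> \<le> C0" unfolding C0_def using fI f0 by (intro sum_mono2) auto
    also have "(\<Sum>p\<in>I \<times> {..J1}. real (m (fst p) (snd p)) * h (snd p)) = (\<Sum>i\<in>I. \<Sum>j\<le>J1. real (m i j) * h j)"
      using fI by (subst sum.Sigma) (auto simp: case_prod_beta)
    also have "\<dots> = (\<Sum>i\<in>I. \<Sum>n<cum m i J1. h (jgen m i n))"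
      using sum_jgen[of h m _ J1] by simp
    also have "\<dots> = (\<Sum>t\<in>(SIGMA i:I. {..<cum m i J1}). h (jj t))"
      using fI unfolding jj_def by (subst sum.Sigma) (auto simp: case_prod_beta)
    finally have Q1: "B < (\<Sum>t\<in>(SIGMA i:I. {..<cum m i J1}). h (jj t)) + C0" using F0 by linarith
    define Q where "Q = (SIGMA i:I. {..<cum m i J1})"
    have fQ: "finite Q" unfolding Q_def using fI by auto
    have QT: "Q \<subseteq> T" unfolding Q_def T_def Nset_def by auto
    have "(\<Sum>t\<in>Q. h (jj t)) = (\<Sum>t\<in>Q - G. h (jj t)) + (\<Sum>t\<in>Q \<inter> G. h (jj t))"
      using fQ by (metis add.commute sum.Int_Diff)
    also have "(\<Sum>t\<in>Q \<inter> G. h (jj t)) \<le> (\<Sum>t\<in>G. h (jj t))"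
      using G h0 by (intro sum_mono2) auto
    finally have Q2: "K / c1 < (\<Sum>t\<in>Q - G. h (jj t))" using Q1 unfolding B_def Q_def by linarith
    have "K = c1 * (K / c1)" using c1 by simp
    also have "\<dots> \<le> c1 * (\<Sum>t\<in>Q - G. h (jj t))" using Q2 c1 by (intro mult_left_mono) auto
    also have "\<dots> = (\<Sum>t\<in>Q - G. c1 * h (jj t))" by (rule sum_distrib_left)
    also have "\<dots> \<le> (\<Sum>t\<in>Q - G. measure M (E t))" using QT by (intro sum_mono low) auto
    finally show ?thesis using fQ QT by (intro exI[of _ "Q - G"]) auto
  qed
  have cT: "countable T" by (rule countable_subset[of _ UNIV]) auto
  have "AE \<omega> in M. infinite {t\<in>T. \<omega> \<in> E t}"
    by (rule bc2[OF P cT Em ind unb])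
  then show ?thesis
  proof (rule eventually_mono)
    fix \<omega> assume "infinite {t\<in>T. \<omega> \<in> E t}"
    then show "infinite {t \<in> (SIGMA i:idx_set CARD('d). Nset m i).
     tdist x (dyad_point (jgen m (fst t) (snd t)) (dyad_index (jgen m (fst t) (snd t)) (X (fst t) (snd t) \<omega>)))
       < \<phi> ((1/2)^(jgen m (fst t) (snd t))) powr (1 / real CARD('d))}"
      by (rule infinite_super[rotated]) (auto simp: E_def T_def I_def jj_def \<psi>_def d_def)
  qed
qed



lemma inf_iff:
  fixes S :: "(nat \<times> nat) set"
  assumes "S \<subseteq> A \<times> UNIV" "finite A"
  shows "infinite S \<longleftrightarrow> (\<forall>N. \<exists>t\<in>S. N \<le> snd t)"
proof
  assume inf: "infinite S"
  show "\<forall>N. \<exists>t\<in>S. N \<le> snd t"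
  proof (rule ccontr)
    assume "\<not> (\<forall>N. \<exists>t\<in>S. N \<le> snd t)"
    then obtain N where "\<forall>t\<in>S. snd t < N" by (auto simp: not_le)
    then have "S \<subseteq> A \<times> {..<N}" using assms by force
    then show False using inf assms finite_subset by blast
  qed
next
  assume H: "\<forall>N. \<exists>t\<in>S. N \<le> snd t"
  show "infinite S"
  proof
    assume "finite S"
    then obtain t where "t \<in> S" "Suc (Max (snd ` S)) \<le> snd t" using H by blast
    moreover have "snd t \<le> Max (snd ` S)" using \<open>finite S\<close> \<open>t \<in> S\<close> by (intro Max_ge) auto
    ultimately show False by simp
  qed
qed

lemma infinite_image_fin_fibers:
  assumes "infinite A" "\<And>y. finite {a\<in>A. g a = y}"
  shows "infinite (g ` A)"
proof
  assume "finite (g ` A)"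
  moreover have "A = (\<Union>y\<in>g ` A. {a\<in>A. g a = y})" by auto
  ultimately have "finite A" using assms(2) by (metis (no_types, lifting) finite_UN_I)
  then show False using assms by simp
qed

lemma claimA:
  fixes X :: "nat \<Rightarrow> nat \<Rightarrow> 'w \<Rightarrow> real^'d" and x :: "real^'d"
  assumes x: "x \<in> unit_cube"
    and inf: "infinite {t \<in> (SIGMA i:idx_set CARD('d). Nset m i).
     tdist x (dyad_point (jgen m (fst t) (snd t)) (dyad_index (jgen m (fst t) (snd t)) (X (fst t) (snd t) \<omega>)))
       < \<psi> ((1/2)^(jgen m (fst t) (snd t)))}" (is "infinite ?A")
  shows "x \<in> Lset \<psi> m X \<omega>"
proof -
  let ?g = "gmap m X \<omega>"
  have fib: "finite {a\<in>?A. ?g a = y}" for y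
  proof -
    obtain i j k where y: "y = (i, j, k)" by (cases y) auto
    have "{a\<in>?A. ?g a = y} \<subseteq> {i} \<times> {..<cum m i j}"
      using jgen_lt unfolding y gmap_def by fastforce
    then show ?thesis by (rule finite_subset) auto
  qed
  have "infinite (?g ` ?A)" by (rule infinite_image_fin_fibers[OF inf fib])
  moreover have "?g ` ?A \<subseteq> {(i, j, k) \<in> Mset m X \<omega>. tdist x (dyad_point j k) < \<psi> ((1/2)^j)}"
    unfolding Mset_eq by (auto simp: gmap_def)
  ultimately have "infinite {(i, j, k) \<in> Mset m X \<omega>. tdist x (dyad_point j k) < \<psi> ((1/2)^j)}"
    using finite_subset by blast
  then show ?thesis using x unfolding Lset_def by simp
qed

theorem lemma6:
  fixes M :: "'w measure" and X :: "nat \<Rightarrow> nat \<Rightarrow> 'w \<Rightarrow> real^'d"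
    and m :: "nat \<Rightarrow> nat \<Rightarrow> nat" and \<phi> :: "real \<Rightarrow> real"
  assumes "prob_space M"
    and "prob_space.indep_vars M (\<lambda>_. borel) (\<lambda>(i, n). X i n) (idx_set CARD('d) \<times> UNIV)"
    and "\<And>i n. i \<in> idx_set CARD('d) \<Longrightarrow>
           distributed M lborel (X i n) (\<lambda>x. indicator unit_cube x)"
    and "\<And>i j. i \<in> idx_set CARD('d) \<Longrightarrow> m i j \<le> 2 ^ (CARD('d) * j)"
    and "continuous_on {0..} \<phi>" and "mono_on {0..} \<phi>" and "\<phi> 0 = 0"
  shows "((\<lambda>(i, j). real (m i j) * \<phi> ((1/2)^j)) summable_on (idx_set CARD('d) \<times> UNIV)
           \<longrightarrow> (AE \<omega> in M. (\<lambda>(i, j, k). \<phi> ((1/2)^j)) summable_on Mset m X \<omega>))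
       \<and> (\<not> (\<lambda>(i, j). real (m i j) * \<phi> ((1/2)^j)) summable_on (idx_set CARD('d) \<times> UNIV)
           \<and> (\<lambda>r. r ^ CARD('d)) \<in> o[at_right 0](\<phi>)
           \<longrightarrow> (AE \<omega> in M. unit_cube - Lset (\<lambda>r. \<phi> r powr (1 / real CARD('d))) m X \<omega>
                  \<in> null_sets lebesgue))"
proof -
  note P = assms(1) and indep = assms(2) and distr = assms(3)
  interpret prob_space M by fact
  have nn: "\<phi> r \<ge> 0" if "r \<ge> 0" for r
    using mono_onD[OF assms(6), of 0 r] that assms(7) by simp
  have nnj: "\<phi> ((1/2)^j) \<ge> 0" for j :: nat by (rule nn) simp
  show ?thesis
  proof (intro conjI impI)
    assume sm: "(\<lambda>(i, j). real (m i j) * \<phi> ((1/2)^j)) summable_on (idx_set CARD('d) \<times> UNIV)"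
    show "AE \<omega> in M. (\<lambda>(i, j, k). \<phi> ((1/2)^j)) summable_on Mset m X \<omega>"
      by (rule always_eventually) (use part1[OF nnj sm, where X=X] in blast)
  next
    assume H: "\<not> (\<lambda>(i, j). real (m i j) * \<phi> ((1/2)^j)) summable_on (idx_set CARD('d) \<times> UNIV)
           \<and> (\<lambda>r. r ^ CARD('d)) \<in> o[at_right 0](\<phi>)"
    obtain J0 where J0: "\<forall>j\<ge>J0. 0 < \<phi> ((1/2)^j) \<and> \<phi> ((1/2)^j) \<le> 1
           \<and> 2 * real CARD('d) * (1/2)^j < \<phi> ((1/2)^j) powr (1 / real CARD('d))"
      using constants[OF assms(5) assms(7) nn, of "CARD('d)"] H by auto
    define I where "I = idx_set CARD('d)"
    have fI: "finite I" unfolding I_def idx_set_def by simp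
    define Xc where "Xc i n \<omega> = (if i \<in> I then X i n \<omega> else 0)" for i n \<omega>
    have Xcm[measurable]: "Xc i n \<in> borel_measurable M" for i n
    proof (cases "i \<in> I")
      case True
      then show ?thesis using distributed_measurable[OF distr[of i n]] unfolding Xc_def I_def by simp
    next
      case False
      then have "Xc i n = (\<lambda>_. 0)" unfolding Xc_def by (simp add: fun_eq_iff)
      then show ?thesis by simp
    qed
    have fm[measurable]: "(\<lambda>p::(real^'d) \<times> 'w. fst p) \<in> borel_measurable (lborel \<Otimes>\<^sub>M M)"
      using measurable_fst[of lborel M] by simp
    have tm[measurable]: "(\<lambda>p. tdist (fst p) (dyad_point j (dyad_index j (Xc i n (snd p))))) \<in> borel_measurable (lborel \<Otimes>\<^sub>M M)" for i n j
      by (rule borel_measurable_continuous_Pair[OF fm _ tdist_cont]) measurable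
    define \<psi> where "\<psi> j = \<phi> ((1/2)^j) powr (1 / real CARD('d))" for j :: nat
    define Pp where "Pp x \<omega> = (x \<in> unit_cube \<longrightarrow> infinite {t \<in> (SIGMA i:idx_set CARD('d). Nset m i).
     tdist x (dyad_point (jgen m (fst t) (snd t)) (dyad_index (jgen m (fst t) (snd t)) (X (fst t) (snd t) \<omega>)))
       < \<psi> (jgen m (fst t) (snd t))})" for x \<omega>
    have Pp_eq: "Pp x \<omega> = (x \<in> unit_cube \<longrightarrow> (\<forall>N. \<exists>i\<in>I. \<exists>n. n \<in> Nset m i \<and> N \<le> n \<and>
       tdist x (dyad_point (jgen m i n) (dyad_index (jgen m i n) (Xc i n \<omega>))) < \<psi> (jgen m i n)))" for x \<omega>
    proof -
      have "Pp x \<omega> = (x \<in> unit_cube \<longrightarrow> (\<forall>N. \<exists>i\<in>I. \<exists>n. n \<in> Nset m i \<and> N \<le> n \<and>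
       tdist x (dyad_point (jgen m i n) (dyad_index (jgen m i n) (X i n \<omega>))) < \<psi> (jgen m i n)))"
        unfolding Pp_def by (subst inf_iff[OF _ fI]) (auto simp: I_def, blast+)
      also have "\<dots> = (x \<in> unit_cube \<longrightarrow> (\<forall>N. \<exists>i\<in>I. \<exists>n. n \<in> Nset m i \<and> N \<le> n \<and>
       tdist x (dyad_point (jgen m i n) (dyad_index (jgen m i n) (Xc i n \<omega>))) < \<psi> (jgen m i n)))"
        unfolding Xc_def by (intro imp_cong refl all_cong bex_cong) auto
      finally show ?thesis .
    qed
    have Ppm: "{p \<in> space (lborel \<Otimes>\<^sub>M M). Pp (fst p) (snd p)} \<in> sets (lborel \<Otimes>\<^sub>M M)"
      unfolding Pp_eq by measurable
    interpret pair_sigma_finite lborel M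
      unfolding pair_sigma_finite_def using sigma_finite_lborel prob_space_imp_sigma_finite[OF P] by simp
    have "AE x in lborel. AE \<omega> in M. Pp x \<omega>"
    proof (rule always_eventually, rule allI)
      fix x :: "real^'d"
      show "AE \<omega> in M. Pp x \<omega>"
      proof (cases "x \<in> unit_cube")
        case True
        show ?thesis unfolding Pp_def \<psi>_def
          using fixed_x[OF P indep distr nn J0 _ True] H by (auto elim!: eventually_mono)
      qed (simp add: Pp_def)
    qed
    then have "AE \<omega> in M. AE x in lborel. Pp x \<omega>" by (subst AE_commute[OF Ppm, symmetric])
    then show "AE \<omega> in M. unit_cube - Lset (\<lambda>r. \<phi> r powr (1 / real CARD('d))) m X \<omega> \<in> null_sets lebesgue"
    proof (rule eventually_mono)
      fix \<omega> assume "AE x in lborel. Pp x \<omega>"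
      then obtain N where N1: "{x \<in> space lborel. \<not> Pp x \<omega>} \<subseteq> N" and N2: "emeasure lborel N = 0"
          and N3: "N \<in> sets lborel"
        by (rule AE_E)
      have N: "{x \<in> space lborel. \<not> Pp x \<omega>} \<subseteq> N" "N \<in> null_sets lborel"
        using N1 N2 N3 by (auto intro: null_setsI)
      have "unit_cube - Lset (\<lambda>r. \<phi> r powr (1 / real CARD('d))) m X \<omega> \<subseteq> N"
      proof
        fix x assume x: "x \<in> unit_cube - Lset (\<lambda>r. \<phi> r powr (1 / real CARD('d))) m X \<omega>"
        have "\<not> Pp x \<omega>"
        proof
          assume "Pp x \<omega>"
          then have "x \<in> Lset (\<lambda>r. \<phi> r powr (1 / real CARD('d))) m X \<omega>"
            using x unfolding Pp_def \<psi>_def by (intro claimA) auto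
          then show False using x by simp
        qed
        then show "x \<in> N" using N by auto
      qed
      moreover have "N \<in> null_sets lebesgue" using N(2) by (rule null_sets_completionI)
      ultimately show "unit_cube - Lset (\<lambda>r. \<phi> r powr (1 / real CARD('d))) m X \<omega> \<in> null_sets lebesgue"
        by (rule null_sets_completion_subset)
    qed
  qed
qed

end
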